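(* Let $n\ge1$ and $\lambda=(\lambda_1,\dots,\lambda_n)\in\mathbb{R}^n$ with $0<\lambda_1\le\cdots\le\lambda_n$, and let $(\mathfrak{a},\langle\cdot,\cdot\rangle_{\mathfrak{a}})$ be an abelian quadratic Lie algebra. Endow $\mathrm{osc}(\lambda)\times\mathfrak{a}$ with the product quadratic structure. Then every derivation $D$ of $\mathrm{osc}(\lambda)\times\mathfrak{a}$ which is skew-symmetric with respect to the product form satisfies $D(e_0)=0$. In particular, $\mathrm{osc}(\lambda)\times\mathfrak{a}$ admits no $k$-symplectic structure for any $k\ge1$.
   Context: The oscillator Lie algebra $\mathrm{osc}(\lambda)$ has basis $\{e_{-1},e_0,e_i,\check e_i\}_{i=1,\dots,n}$ with nonvanishing brackets $[e_{-1},e_i]=\lambda_i\check e_i$, $[e_{-1},\check e_i]=-\lambda_ie_i$, $[e_i,\check e_i]=e_0$ (and those obtained by antisymmetry), and invariant quadratic form given for $x=x_{-1}e_{-1}+x_0e_0+\sum_i(x_ie_i+y_i\check e_i)$ by $\langle x,x\rangle=2x_{-1}x_0+\sum_i\frac{1}{\lambda_i}(x_i^2+y_i^2)$. An abelian quadratic Lie algebra is an abelian real Lie algebra with a nondegenerate symmetric bilinear form; the product structure is the Lie algebra direct product with orthogonal sum of forms. A $k$-symplectic structure on a real Lie algebra $\mathfrak{k}$ of dimension $m(k+1)$ ($m,k\ge1$) is a pair consisting of a Lie subalgebra $\mathfrak{h}\subset\mathfrak{k}$ of dimension $mk$ and a family $(\theta_1,\dots,\theta_k)$ of skew-symmetric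 bilinear forms on $\mathfrak{k}$ such that: (i) $\bigcap_{i=1}^k\ker\theta_i=\{0\}$, where $\ker\theta_i=\{u:\theta_i(u,v)=0\ \forall v\}$; (ii) each $\theta_i$ is a 2-cocycle: $\theta_i([u,v],w)+\theta_i([v,w],u)+\theta_i([w,u],v)=0$ for all $u,v,w$; (iii) $\theta_i(u,v)=0$ for all $u,v\in\mathfrak{h}$ and all $i$. *)

theory Defs
  imports "HOL-Analysis.Analysis"
begin

text \<open>Elements of osc(lambda) x a are tuples (s, t, x, y, p) meaning
  s e_{-1} + t e_0 + sum_i (x_i e_i + y_i e'_i) + p, where p lies in the
  abelian factor, given as a linear subspace A of a finite-dimensional real
  vector space 'a (so that A = 0 is allowed).\<close>

type_synonym ('n, 'a) oscv = "real \<times> real \<times> (real^'n) \<times> (real^'n) \<times> 'a"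

definition osc_carrier :: "'a::real_vector set \<Rightarrow> ('n::finite, 'a) oscv set" where
  "osc_carrier A = {(s, t, x, y, p). p \<in> A}"

definition osc_bracket :: "real^'n::finite \<Rightarrow> ('n, 'a::real_vector) oscv \<Rightarrow> ('n, 'a) oscv \<Rightarrow> ('n, 'a) oscv" where
  "osc_bracket lam u v = (case u of (s1, t1, x1, y1, p1) \<Rightarrow> case v of (s2, t2, x2, y2, p2) \<Rightarrow>
     (0,
      (\<Sum>i\<in>UNIV. x1$i * y2$i - y1$i * x2$i),
      (\<chi> i. lam$i * (s2 * y1$i - s1 * y2$i)),
      (\<chi> i. lam$i * (s1 * x2$i - s2 * x1$i)),
      0))"

definition osc_form :: "real^'n::finite \<Rightarrow> ('a \<Rightarrow> 'a \<Rightarrow> real) \<Rightarrow> ('n, 'a) oscv \<Rightarrow> ('n, 'a) oscv \<Rightarrow> real" where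
  "osc_form lam B u v = (case u of (s1, t1, x1, y1, p1) \<Rightarrow> case v of (s2, t2, x2, y2, p2) \<Rightarrow>
     s1 * t2 + t1 * s2 + (\<Sum>i\<in>UNIV. (x1$i * x2$i + y1$i * y2$i) / lam$i) + B p1 p2)"

definition osc_e0 :: "('n::finite, 'a::real_vector) oscv" where
  "osc_e0 = (0, 1, 0, 0, 0)"

definition is_derivation :: "'v::real_vector set \<Rightarrow> ('v \<Rightarrow> 'v \<Rightarrow> 'v) \<Rightarrow> ('v \<Rightarrow> 'v) \<Rightarrow> bool" where
  "is_derivation K br D \<longleftrightarrow>
     (\<forall>u\<in>K. D u \<in> K) \<and>
     (\<forall>u\<in>K. \<forall>v\<in>K. D (u + v) = D u + D v) \<and>
     (\<forall>c. \<forall>u\<in>K. D (c *\<^sub>R u) = c *\<^sub>R D u) \<and>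
     (\<forall>u\<in>K. \<forall>v\<in>K. D (br u v) = br (D u) v + br u (D v))"

definition is_skew_wrt :: "'v set \<Rightarrow> ('v \<Rightarrow> 'v \<Rightarrow> real) \<Rightarrow> ('v \<Rightarrow> 'v) \<Rightarrow> bool" where
  "is_skew_wrt K q D \<longleftrightarrow> (\<forall>u\<in>K. \<forall>v\<in>K. q (D u) v + q u (D v) = 0)"

definition skew_bilinear_on :: "'v::real_vector set \<Rightarrow> ('v \<Rightarrow> 'v \<Rightarrow> real) \<Rightarrow> bool" where
  "skew_bilinear_on K \<theta> \<longleftrightarrow>
     (\<forall>u\<in>K. \<forall>v\<in>K. \<forall>w\<in>K. \<theta> (u + v) w = \<theta> u w + \<theta> v w) \<and>
     (\<forall>c. \<forall>u\<in>K. \<forall>w\<in>K. \<theta> (c *\<^sub>R u) w = c * \<theta> u w) \<and>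
     (\<forall>u\<in>K. \<forall>v\<in>K. \<theta> u v = - \<theta> v u)"

definition form_kernel :: "'v set \<Rightarrow> ('v \<Rightarrow> 'v \<Rightarrow> real) \<Rightarrow> 'v set" where
  "form_kernel K \<theta> = {u\<in>K. \<forall>v\<in>K. \<theta> u v = 0}"

definition k_symplectic_structure ::
  "'v::euclidean_space set \<Rightarrow> ('v \<Rightarrow> 'v \<Rightarrow> 'v) \<Rightarrow> nat \<Rightarrow> nat \<Rightarrow> 'v set \<Rightarrow> (nat \<Rightarrow> 'v \<Rightarrow> 'v \<Rightarrow> real) \<Rightarrow> bool" where
  "k_symplectic_structure K br m k h \<theta> \<longleftrightarrow>
     dim K = m * (k + 1) \<and>
     subspace h \<and> h \<subseteq> K \<and> dim h = m * k \<and> (\<forall>u\<in>h. \<forall>v\<in>h. br u v \<in> h) \<and>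
     (\<forall>i\<in>{1..k}. skew_bilinear_on K (\<theta> i)) \<and>
     (\<Inter>i\<in>{1..k}. form_kernel K (\<theta> i)) = {0} \<and>
     (\<forall>i\<in>{1..k}. \<forall>u\<in>K. \<forall>v\<in>K. \<forall>w\<in>K.
        \<theta> i (br u v) w + \<theta> i (br v w) u + \<theta> i (br w u) v = 0) \<and>
     (\<forall>i\<in>{1..k}. \<forall>u\<in>h. \<forall>v\<in>h. \<theta> i u v = 0)"

definition admits_k_symplectic :: "'v::euclidean_space set \<Rightarrow> ('v \<Rightarrow> 'v \<Rightarrow> 'v) \<Rightarrow> nat \<Rightarrow> bool" where
  "admits_k_symplectic K br k \<longleftrightarrow> (\<exists>m\<ge>1. \<exists>h \<theta>. k_symplectic_structure K br m k h \<theta>)"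

end

theory Submission
  imports Defs
begin

definition em1 :: "('n::finite, 'a::real_vector) oscv" where "em1 = (1,0,0,0,0)"
definition ei :: "'n::finite \<Rightarrow> ('n, 'a::real_vector) oscv" where "ei i = (0,0,axis i 1,0,0)"
definition eci :: "'n::finite \<Rightarrow> ('n, 'a::real_vector) oscv" where "eci i = (0,0,0,axis i 1,0)"

lemma sum_axis1: "(\<Sum>j\<in>UNIV. f j * (if j = (i::'n::finite) then 1 else (0::real))) = f i"
proof -
  have "(\<Sum>j\<in>UNIV. f j * (if j = i then 1 else (0::real))) = (\<Sum>j\<in>UNIV. if j = i then f j else 0)"
    by (intro sum.cong) auto
  also have "... = f i" by (simp add: sum.delta)
  finally show ?thesis .
qed
lemma sum_axis2: "(\<Sum>j\<in>UNIV. (if j = (i::'n::finite) then 1 else (0::real)) * f j) = f i"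
proof -
  have "(\<Sum>j\<in>UNIV. (if j = i then 1 else (0::real)) * f j) = (\<Sum>j\<in>UNIV. if j = i then f j else 0)"
    by (intro sum.cong) auto
  also have "... = f i" by (simp add: sum.delta)
  finally show ?thesis .
qed

lemma B1: "osc_bracket lam (ei i) (eci i) = (osc_e0 :: ('n::finite,'a::real_vector) oscv)"
  by (simp add: osc_bracket_def ei_def eci_def osc_e0_def sum_axis1 vec_eq_iff axis_def)

lemma B2: "osc_bracket lam (eci i) (em1::('n::finite,'a::real_vector) oscv) = lam$i *\<^sub>R ei i"
  by (simp add: osc_bracket_def ei_def eci_def em1_def vec_eq_iff axis_def)

lemma B3: "osc_bracket lam (em1::('n::finite,'a::real_vector) oscv) (ei i) = lam$i *\<^sub>R eci i"
  by (simp add: osc_bracket_def ei_def eci_def em1_def vec_eq_iff axis_def)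

lemma B4: "osc_bracket lam u (osc_e0::('n::finite,'a::real_vector) oscv) = 0"
  "osc_bracket lam (osc_e0::('n::finite,'a::real_vector) oscv) u = 0"
  by (auto simp: osc_bracket_def osc_e0_def vec_eq_iff zero_prod_def split: prod.splits)

lemma B5: "osc_bracket lam u ((0,0,0,0,p)::('n::finite,'a::real_vector) oscv) = 0"
  "osc_bracket lam ((0,0,0,0,p)::('n::finite,'a::real_vector) oscv) u = 0"
  by (auto simp: osc_bracket_def vec_eq_iff zero_prod_def split: prod.splits)

lemma B6: assumes "\<forall>i. 0 < lam$i"
  shows "osc_bracket lam (em1::('n::finite,'a::real_vector) oscv) (0,0,\<chi> j. y$j/lam$j, \<chi> j. -(x$j)/lam$j, 0) = (0,0,x,y,0)"
  using assms by (simp add: osc_bracket_def em1_def vec_eq_iff) (metis less_irrefl)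

lemma fst_br: "fst (osc_bracket lam u v) = 0"
  by (simp add: osc_bracket_def split: prod.splits)

lemma Bu: "osc_bracket lam ((s,t,x,y,p)::('n::finite,'a::real_vector) oscv) (eci i) = (0, x$i, - (s * lam$i) *\<^sub>R axis i 1, 0, 0)"
  by (simp add: osc_bracket_def eci_def vec_eq_iff sum_axis2 sum_axis1 axis_def)

lemma Bv: "osc_bracket lam (ei i) ((s,t,x,y,p)::('n::finite,'a::real_vector) oscv) = (0, y$i, 0, - (s * lam$i) *\<^sub>R axis i 1, 0)"
  by (simp add: osc_bracket_def ei_def vec_eq_iff sum_axis2 sum_axis1 axis_def)

lemma sum_single_nz: "(\<And>j. j \<noteq> i \<Longrightarrow> g j = 0) \<Longrightarrow> sum g UNIV = (g (i::'n::finite) :: real)"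
proof -
  assume h: "\<And>j. j \<noteq> i \<Longrightarrow> g j = 0"
  have "sum g UNIV = (\<Sum>j\<in>UNIV. if j = i then g j else 0)" by (intro sum.cong) (auto simp: h)
  also have "... = g i" by (simp add: sum.delta)
  finally show ?thesis .
qed

lemma mem_K: "((s,t,x,y,p) \<in> osc_carrier A) \<longleftrightarrow> p \<in> A"
  by (simp add: osc_carrier_def)

lemma K_add: "subspace A \<Longrightarrow> u \<in> osc_carrier A \<Longrightarrow> v \<in> osc_carrier A \<Longrightarrow> u + v \<in> osc_carrier A"
  by (cases u, cases v) (auto simp: osc_carrier_def subspace_add)

lemma K_scale: "subspace A \<Longrightarrow> u \<in> osc_carrier A \<Longrightarrow> c *\<^sub>R u \<in> osc_carrier A"
  by (cases u) (auto simp: osc_carrier_def subspace_scale)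

lemma K_basic: assumes "subspace A"
  shows "(em1::('n::finite,'a::real_vector) oscv) \<in> osc_carrier A" "(ei i :: ('n,'a) oscv) \<in> osc_carrier A"
    "(eci i :: ('n,'a) oscv) \<in> osc_carrier A" "(osc_e0 :: ('n,'a) oscv) \<in> osc_carrier A"
    "((0,0,x,y,0) :: ('n,'a) oscv) \<in> osc_carrier A"
  using subspace_0[OF assms] by (auto simp: em1_def ei_def eci_def osc_e0_def osc_carrier_def)

lemma kernel_e0:
  fixes lam :: "real^'n::finite" and A :: "'a::real_vector set"
  assumes lam_pos: "\<forall>i. 0 < lam$i" and A: "subspace A"
    and sk: "skew_bilinear_on (osc_carrier A) \<theta>"
    and cc: "\<forall>u\<in>osc_carrier A. \<forall>v\<in>osc_carrier A. \<forall>w\<in>osc_carrier A.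
        \<theta> (osc_bracket lam u v) w + \<theta> (osc_bracket lam v w) u + \<theta> (osc_bracket lam w u) v = 0"
  shows "(osc_e0 :: ('n,'a) oscv) \<in> form_kernel (osc_carrier A) \<theta>"
proof -
  let ?K = "osc_carrier A :: ('n,'a) oscv set"
  have add1: "\<And>u v w. u \<in> ?K \<Longrightarrow> v \<in> ?K \<Longrightarrow> w \<in> ?K \<Longrightarrow> \<theta> (u + v) w = \<theta> u w + \<theta> v w"
    and sc1: "\<And>c u w. u \<in> ?K \<Longrightarrow> w \<in> ?K \<Longrightarrow> \<theta> (c *\<^sub>R u) w = c * \<theta> u w"
    and skw: "\<And>u v. u \<in> ?K \<Longrightarrow> v \<in> ?K \<Longrightarrow> \<theta> u v = - \<theta> v u"
    using sk unfolding skew_bilinear_on_def by blast+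
  have self0: "\<theta> u u = 0" if u: "u \<in> ?K" for u
  proof -
    have "\<theta> u u = - \<theta> u u" by (rule skw[OF u u])
    then show ?thesis by linarith
  qed
  have z0: "\<And>w. w \<in> ?K \<Longrightarrow> \<theta> 0 w = 0"
  proof -
    fix w assume w: "w \<in> ?K"
    have "\<theta> ((0::real) *\<^sub>R w) w = 0 * \<theta> w w" by (rule sc1[OF w w])
    then show "\<theta> 0 w = 0" by simp
  qed
  have ccI: "\<And>u v w. u \<in> ?K \<Longrightarrow> v \<in> ?K \<Longrightarrow> w \<in> ?K \<Longrightarrow>
        \<theta> (osc_bracket lam u v) w + \<theta> (osc_bracket lam v w) u + \<theta> (osc_bracket lam w u) v = 0"
    using cc by blast
  obtain i :: 'n where True by simp
  note KB = K_basic[OF A]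
  have e0K: "(osc_e0 :: ('n,'a) oscv) \<in> ?K" by (rule KB)
  have a: "\<theta> em1 osc_e0 = 0"
  proof -
    have "\<theta> (osc_bracket lam (ei i) (eci i)) em1 + \<theta> (osc_bracket lam (eci i) em1) (ei i)
       + \<theta> (osc_bracket lam em1 (ei i)) (eci i) = 0" by (rule ccI) (rule KB)+
    then have "\<theta> osc_e0 em1 + lam$i * \<theta> (ei i) (ei i) + lam$i * \<theta> (eci i) (eci i) = 0"
      by (simp add: B1 B2 B3 sc1 KB)
    then have "\<theta> osc_e0 em1 = 0" by (simp add: self0 KB)
    then show ?thesis using skw[OF KB(1) e0K] by simp
  qed
  have b: "\<theta> osc_e0 osc_e0 = 0" by (rule self0[OF e0K])
  have c: "\<theta> ((0,0,x,y,0)::('n,'a) oscv) osc_e0 = 0" for x y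
  proof -
    define w :: "('n,'a) oscv" where "w = (0,0,\<chi> j. y$j/lam$j, \<chi> j. -(x$j)/lam$j, 0)"
    have wK: "w \<in> ?K" unfolding w_def by (rule KB)
    have "\<theta> (osc_bracket lam em1 w) osc_e0 + \<theta> (osc_bracket lam w osc_e0) em1
       + \<theta> (osc_bracket lam osc_e0 em1) w = 0" by (rule ccI[OF KB(1) wK e0K])
    then have "\<theta> (osc_bracket lam em1 w) osc_e0 = 0" by (simp add: B4 z0 KB wK)
    moreover have "osc_bracket lam em1 w = (0,0,x,y,0)" unfolding w_def by (rule B6[OF lam_pos])
    ultimately show ?thesis by simp
  qed
  have d: "\<theta> ((0,0,0,0,p)::('n,'a) oscv) osc_e0 = 0" if p: "p \<in> A" for p
  proof -
    have pK: "((0,0,0,0,p)::('n,'a) oscv) \<in> ?K" using p by (simp add: mem_K)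
    have "\<theta> (osc_bracket lam (ei i) (eci i)) (0,0,0,0,p) + \<theta> (osc_bracket lam (eci i) (0,0,0,0,p)) (ei i)
       + \<theta> (osc_bracket lam (0,0,0,0,p) (ei i)) (eci i) = 0" by (rule ccI[OF KB(2) KB(3) pK])
    then have "\<theta> osc_e0 (0,0,0,0,p) = 0" by (simp add: B1 B5 z0 KB)
    then show ?thesis using skw[OF pK e0K] by simp
  qed
  have all: "\<theta> v osc_e0 = 0" if v: "v \<in> ?K" for v
  proof -
    obtain s t x y p where vv: "v = (s,t,x,y,p)" by (cases v) auto
    have p: "p \<in> A" using v vv by (simp add: mem_K)
    have pK: "((0,0,0,0,p)::('n,'a) oscv) \<in> ?K" using p by (simp add: mem_K)
    have dec: "v = s *\<^sub>R em1 + (t *\<^sub>R osc_e0 + ((0,0,x,y,0) + (0,0,0,0,p)))"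
      by (simp add: vv em1_def osc_e0_def)
    have K1: "s *\<^sub>R em1 \<in> ?K" "t *\<^sub>R osc_e0 \<in> ?K" "(0,0,x,y,0) + (0,0,0,0,p) \<in> ?K"
      "t *\<^sub>R osc_e0 + ((0,0,x,y,0) + (0,0,0,0,p)) \<in> ?K"
    proof -
      show k1: "s *\<^sub>R em1 \<in> ?K" by (rule K_scale[OF A KB(1)])
      show k2: "t *\<^sub>R osc_e0 \<in> ?K" by (rule K_scale[OF A e0K])
      show k3: "(0,0,x,y,0) + (0,0,0,0,p) \<in> ?K" by (rule K_add[OF A KB(5) pK])
      show "t *\<^sub>R osc_e0 + ((0,0,x,y,0) + (0,0,0,0,p)) \<in> ?K" by (rule K_add[OF A k2 k3])
    qed
    have "\<theta> v osc_e0 = s * \<theta> em1 osc_e0 + (t * \<theta> osc_e0 osc_e0 + (\<theta> (0,0,x,y,0) osc_e0 + \<theta> (0,0,0,0,p) osc_e0))"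
      apply (subst dec)
      apply (subst add1[OF K1(1) K1(4) e0K])
      apply (subst add1[OF K1(2) K1(3) e0K])
      apply (subst add1[OF KB(5) pK e0K])
      apply (simp add: sc1 KB e0K)
      done
    then show ?thesis using a b c d[OF p] by simp
  qed
  have "\<theta> osc_e0 v = 0" if v: "v \<in> ?K" for v
    using skw[OF e0K v] all[OF v] by simp
  then show ?thesis unfolding form_kernel_def using e0K by blast
qed


lemma form_ei: "osc_form lam B ((s,t,x,y,p)::('n::finite,'a::real_vector) oscv) (ei i) = x$i/lam$i + B p 0"
  "osc_form lam B (ei i) ((s,t,x,y,p)::('n::finite,'a::real_vector) oscv) = x$i/lam$i + B 0 p"
  "osc_form lam B ((s,t,x,y,p)::('n::finite,'a::real_vector) oscv) (eci i) = y$i/lam$i + B p 0"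
  "osc_form lam B (eci i) ((s,t,x,y,p)::('n::finite,'a::real_vector) oscv) = y$i/lam$i + B 0 p"
  by (simp_all add: osc_form_def ei_def eci_def, (subst sum_single_nz[where i=i], simp add: axis_def, simp add: axis_def)+)

lemma deriv_e0:
  fixes lam :: "real^'n::finite" and A :: "'a::real_vector set"
  assumes lam_pos: "\<forall>i. 0 < lam$i" and A: "subspace A"
    and B_lin: "\<forall>p\<in>A. \<forall>q\<in>A. \<forall>r\<in>A. \<forall>c. B (p + q) r = B p r + B q r \<and> B (c *\<^sub>R p) r = c * B p r"
    and B_sym: "\<forall>p\<in>A. \<forall>q\<in>A. B p q = B q p"
    and der: "is_derivation (osc_carrier A) (osc_bracket lam) D"
    and skew: "is_skew_wrt (osc_carrier A) (osc_form lam B) D"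
  shows "D (osc_e0 :: ('n,'a) oscv) = 0"
proof -
  let ?K = "osc_carrier A :: ('n,'a) oscv set"
  have DK: "\<And>u. u \<in> ?K \<Longrightarrow> D u \<in> ?K"
    and Dbr: "\<And>u v. u \<in> ?K \<Longrightarrow> v \<in> ?K \<Longrightarrow> D (osc_bracket lam u v) = osc_bracket lam (D u) v + osc_bracket lam u (D v)"
    using der unfolding is_derivation_def by blast+
  have sk: "\<And>u v. u \<in> ?K \<Longrightarrow> v \<in> ?K \<Longrightarrow> osc_form lam B (D u) v + osc_form lam B u (D v) = 0"
    using skew unfolding is_skew_wrt_def by blast
  have B0: "B 0 r = 0" "B r 0 = 0" if r: "r \<in> A" for r
  proof -
    have z: "0 \<in> A" by (rule subspace_0[OF A])
    have "B ((0::real) *\<^sub>R 0) r = 0 * B 0 r" using B_lin z r by blast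
    then show "B 0 r = 0" by simp
    then show "B r 0 = 0" using B_sym z r by metis
  qed
  note KB = K_basic[OF A]
  obtain i :: 'n where True by simp
  have fst0: "fst (D u) = 0" if u: "u \<in> ?K" and ub: "\<exists>a\<in>?K. \<exists>b\<in>?K. u = osc_bracket lam a b" for u
    using ub Dbr by (auto simp: fst_br)
  have eiB: "ei i = osc_bracket lam em1 ((0,0,\<chi> j. 0$j/lam$j, \<chi> j. -(axis i 1 $ j)/lam$j, 0)::('n,'a) oscv)"
    unfolding ei_def by (rule sym, rule B6[OF lam_pos])
  have eciB: "eci i = osc_bracket lam em1 ((0,0,\<chi> j. (axis i 1 $ j)/lam$j, \<chi> j. -(0$j)/lam$j, 0)::('n,'a) oscv)"
    unfolding eci_def by (rule sym, rule B6[OF lam_pos])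
  obtain s1 t1 x1 y1 p1 where D1: "D (ei i) = (s1,t1,x1,y1,p1)" by (cases "D (ei i)") auto
  obtain s2 t2 x2 y2 p2 where D2: "D (eci i) = (s2,t2,x2,y2,p2)" by (cases "D (eci i)") auto
  have p1: "p1 \<in> A" using DK[OF KB(2)[of i]] D1 by (simp add: mem_K)
  have p2: "p2 \<in> A" using DK[OF KB(3)[of i]] D2 by (simp add: mem_K)
  have s1: "s1 = 0" using fst0[OF KB(2)] eiB KB D1 by fastforce
  have s2: "s2 = 0" using fst0[OF KB(3)] eciB KB D2 by fastforce
  have "osc_form lam B (D (ei i)) (ei i) + osc_form lam B (ei i) (D (ei i)) = 0" by (rule sk) (rule KB)+
  then have "2 * (x1$i/lam$i) = 0" by (simp add: D1 form_ei B0[OF p1])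
  then have x1: "x1$i = 0" using lam_pos by (metis divide_eq_0_iff less_irrefl mult_eq_0_iff zero_neq_numeral)
  have "osc_form lam B (D (eci i)) (eci i) + osc_form lam B (eci i) (D (eci i)) = 0" by (rule sk) (rule KB)+
  then have "2 * (y2$i/lam$i) = 0" by (simp add: D2 form_ei B0[OF p2])
  then have y2: "y2$i = 0" using lam_pos by (metis divide_eq_0_iff less_irrefl mult_eq_0_iff zero_neq_numeral)
  have "D osc_e0 = osc_bracket lam (D (ei i)) (eci i) + osc_bracket lam (ei i) (D (eci i))"
    using Dbr[OF KB(2)[of i] KB(3)[of i]] unfolding B1 .
  also have "... = 0" by (simp add: D1 D2 Bu Bv s1 s2 x1 y2 zero_prod_def)
  finally show ?thesis .
qed

theorem mainTheorem9:
  fixes lam :: "real^'n::{finite,linorder}"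
    and A :: "'a::euclidean_space set"
    and B :: "'a \<Rightarrow> 'a \<Rightarrow> real"
  assumes lam_pos: "\<forall>i. 0 < lam$i"
    and lam_mono: "\<forall>i j. i \<le> j \<longrightarrow> lam$i \<le> lam$j"
    and A_sub: "subspace A"
    and B_lin: "\<forall>p\<in>A. \<forall>q\<in>A. \<forall>r\<in>A. \<forall>c. B (p + q) r = B p r + B q r \<and> B (c *\<^sub>R p) r = c * B p r"
    and B_sym: "\<forall>p\<in>A. \<forall>q\<in>A. B p q = B q p"
    and B_nondeg: "\<forall>p\<in>A. (\<forall>q\<in>A. B p q = 0) \<longrightarrow> p = 0"
  shows "(\<forall>D. is_derivation (osc_carrier A) (osc_bracket lam) D \<and>
              is_skew_wrt (osc_carrier A) (osc_form lam B) D
            \<longrightarrow> D osc_e0 = 0) \<and>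
         (\<forall>k\<ge>1. \<not> admits_k_symplectic (osc_carrier A :: ('n, 'a) oscv set) (osc_bracket lam) k)"
proof (intro conjI allI impI)
  fix D :: "('n,'a) oscv \<Rightarrow> ('n,'a) oscv"
  assume "is_derivation (osc_carrier A) (osc_bracket lam) D \<and> is_skew_wrt (osc_carrier A) (osc_form lam B) D"
  then show "D osc_e0 = 0" using deriv_e0[OF lam_pos A_sub B_lin B_sym] by blast
next
  fix k :: nat assume k: "k \<ge> 1"
  show "\<not> admits_k_symplectic (osc_carrier A :: ('n, 'a) oscv set) (osc_bracket lam) k"
  proof
    assume "admits_k_symplectic (osc_carrier A :: ('n, 'a) oscv set) (osc_bracket lam) k"
    then obtain m h \<theta> where S: "k_symplectic_structure (osc_carrier A :: ('n, 'a) oscv set) (osc_bracket lam) m k h \<theta>"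
      unfolding admits_k_symplectic_def by blast
    then have sk: "\<forall>i\<in>{1..k}. skew_bilinear_on (osc_carrier A) (\<theta> i)"
      and ker: "(\<Inter>i\<in>{1..k}. form_kernel (osc_carrier A) (\<theta> i)) = {0}"
      and cc: "\<forall>i\<in>{1..k}. \<forall>u\<in>osc_carrier A. \<forall>v\<in>osc_carrier A. \<forall>w\<in>osc_carrier A.
        \<theta> i (osc_bracket lam u v) w + \<theta> i (osc_bracket lam v w) u + \<theta> i (osc_bracket lam w u) v = 0"
      unfolding k_symplectic_structure_def by blast+
    have "(osc_e0 :: ('n,'a) oscv) \<in> (\<Inter>i\<in>{1..k}. form_kernel (osc_carrier A) (\<theta> i))"
    proof
      fix i assume i: "i \<in> {1..k}"
      show "(osc_e0 :: ('n,'a) oscv) \<in> form_kernel (osc_carrier A) (\<theta> i)"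
        by (rule kernel_e0[OF lam_pos A_sub]) (use sk cc i in blast)+
    qed
    then have "(osc_e0 :: ('n,'a) oscv) \<in> {0}" using ker by metis
    then have "(osc_e0 :: ('n,'a) oscv) = 0" by simp
    then show False by (simp add: osc_e0_def zero_prod_def)
  qed
qed

end
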